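(* Let $S$ be a fixed set of permissible block sizes and $L$ a fixed set of permissible loop orders, and let $\mathcal{C}$ be the class of all Greechie diagrams all of whose blocks have size in $S$ and all of whose loops have order in $L$, optionally further restricted to connected diagrams. Then the only irreducible diagrams in $\mathcal{C}$ are those with exactly one block; equivalently, every $D\in\mathcal{C}$ with more than one block has a block $e$ with $D-e\in\mathcal{C}$.
   Context: A diagram is a pair $(V,E)$ with $V\neq\emptyset$ a set of atoms and $E$ a set of nonempty subsets of $V$ (blocks). A loop of order $n\ge2$ is a sequence $(e_1,\dots,e_n)$ of mutually different blocks for which there are mutually distinct atoms $\nu_1,\dots,\nu_n$ with $\nu_i\in e_i\cap e_{i+1}$ ($i=1,\dots,n$, $e_{n+1}=e_1$). A Greechie diagram is a diagram such that: (1) every atom belongs to at least one block; (2) if there are at least two atoms, every block has at least 2 elements; (3) every block intersecting another block has at least 3 elements; (4) two different blocks intersect in at most one atom; (5) there is no loop of order 3. A diagram is connected if for all atoms $\nu,\nu'$ there are blocks $e_1,\dots,e_k$ with $\nu\in e_1$, $\nu'\in e_k$ and $e_i\cap e_{i+1}\neq\emptyset$ for $1\le i\le k-1$. For $e\in E$, $D-e$ is obtained by removing $e$ and any atoms that lay in $e$ but in no other block. $D\in\mathcal{C}$ is irreducible if there is no block $e$ of $D$ with $D-e\in\mathcal{C}$. *)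

theory Defs
  imports Main
begin

type_synonym 'a diagram = "'a set \<times> 'a set set"

definition is_diagram :: "'a diagram \<Rightarrow> bool" where
  "is_diagram D \<longleftrightarrow> (let (V, E) = D in
     V \<noteq> {} \<and> (\<forall>e\<in>E. e \<noteq> {} \<and> e \<subseteq> V))"

definition is_loop :: "'a set set \<Rightarrow> 'a set list \<Rightarrow> bool" where
  "is_loop E es \<longleftrightarrow> length es \<ge> 2 \<and> distinct es \<and> set es \<subseteq> E \<and>
     (\<exists>nus. length nus = length es \<and> distinct nus \<and>
        (\<forall>i < length es. nus ! i \<in> es ! i \<inter> es ! (Suc i mod length es)))"

definition greechie :: "'a diagram \<Rightarrow> bool" where
  "greechie D \<longleftrightarrow> is_diagram D \<and> (let (V, E) = D in
     (\<forall>v\<in>V. \<exists>e\<in>E. v \<in> e) \<and>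
     ((\<exists>x\<in>V. \<exists>y\<in>V. x \<noteq> y) \<longrightarrow> (\<forall>e\<in>E. card e \<ge> 2)) \<and>
     (\<forall>e\<in>E. (\<exists>f\<in>E. f \<noteq> e \<and> e \<inter> f \<noteq> {}) \<longrightarrow> card e \<ge> 3) \<and>
     (\<forall>e\<in>E. \<forall>f\<in>E. e \<noteq> f \<longrightarrow> card (e \<inter> f) \<le> 1) \<and>
     (\<nexists>es. is_loop E es \<and> length es = 3))"

definition connected_diagram :: "'a diagram \<Rightarrow> bool" where
  "connected_diagram D \<longleftrightarrow> (let (V, E) = D in
     \<forall>v\<in>V. \<forall>v'\<in>V. \<exists>es. es \<noteq> [] \<and> set es \<subseteq> E \<and> v \<in> hd es \<and> v' \<in> last es \<and>
        (\<forall>i. Suc i < length es \<longrightarrow> es ! i \<inter> es ! Suc i \<noteq> {}))"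

definition remove_block :: "'a diagram \<Rightarrow> 'a set \<Rightarrow> 'a diagram" where
  "remove_block D e = (let (V, E) = D in
     (V - {v \<in> e. \<forall>f\<in>E - {e}. v \<notin> f}, E - {e}))"

definition diag_class :: "nat set \<Rightarrow> nat set \<Rightarrow> bool \<Rightarrow> 'a diagram set" where
  "diag_class S L conn = {D. finite (fst D) \<and> greechie D \<and>
     (\<forall>e\<in>snd D. card e \<in> S) \<and>
     (\<forall>es. is_loop (snd D) es \<longrightarrow> length es \<in> L) \<and>
     (conn \<longrightarrow> connected_diagram D)}"

definition irreducible_in :: "'a diagram set \<Rightarrow> 'a diagram \<Rightarrow> bool" where
  "irreducible_in C D \<longleftrightarrow> D \<in> C \<and> \<not> (\<exists>e\<in>snd D. remove_block D e \<in> C)"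

end

theory Submission
  imports Defs
begin

definition adjb :: "'a set set \<Rightarrow> ('a set \<times> 'a set) set" where
  "adjb E = {(f,g). f \<in> E \<and> g \<in> E \<and> f \<inter> g \<noteq> {}}"

lemma loop_mono: "is_loop E' es \<Longrightarrow> E' \<subseteq> E \<Longrightarrow> is_loop E es"
  unfolding is_loop_def by auto

lemma walk_rtrancl:
  "es \<noteq> [] \<Longrightarrow> set es \<subseteq> E \<Longrightarrow> (\<forall>i. Suc i < length es \<longrightarrow> es!i \<inter> es!Suc i \<noteq> {})
   \<Longrightarrow> (hd es, last es) \<in> (adjb E)\<^sup>*"
proof (induction es)
  case Nil then show ?case by simp
next
  case (Cons a es)
  show ?case
  proof (cases "es = []")
    case True then show ?thesis by simp
  next
    case False
    have h: "\<forall>i. Suc i < length es \<longrightarrow> es!i \<inter> es!Suc i \<noteq> {}"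
    proof (intro allI impI)
      fix i assume "Suc i < length es"
      then show "es!i \<inter> es!Suc i \<noteq> {}" using Cons.prems(3)[rule_format, of "Suc i"] by simp
    qed
    have "(hd es, last es) \<in> (adjb E)\<^sup>*" using Cons.IH False Cons.prems h by simp
    moreover have "(a, hd es) \<in> adjb E"
    proof -
      have "hd es \<in> E" using False Cons.prems(2) hd_in_set by auto
      moreover have "a \<inter> hd es \<noteq> {}"
        using Cons.prems(3)[rule_format, of 0] False by (simp add: hd_conv_nth)
      ultimately show ?thesis using Cons.prems(2) by (auto simp: adjb_def)
    qed
    ultimately show ?thesis using False
      by (simp add: converse_rtrancl_into_rtrancl)
  qed
qed

lemma rtrancl_walk:
  assumes "(f,g) \<in> (adjb E)\<^sup>*" "f \<in> E"
  shows "\<exists>es. es \<noteq> [] \<and> set es \<subseteq> E \<and> hd es = f \<and> last es = g \<and>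
           (\<forall>i. Suc i < length es \<longrightarrow> es!i \<inter> es!Suc i \<noteq> {})"
  using assms(1)
proof (induction rule: rtrancl_induct)
  case base
  then show ?case using assms(2) by (intro exI[of _ "[f]"]) auto
next
  case (step y z)
  then obtain es where es: "es \<noteq> []" "set es \<subseteq> E" "hd es = f" "last es = y"
     "\<forall>i. Suc i < length es \<longrightarrow> es!i \<inter> es!Suc i \<noteq> {}" by blast
  have yz: "y \<in> E" "z \<in> E" "y \<inter> z \<noteq> {}" using step(2) by (auto simp: adjb_def)
  have "\<forall>i. Suc i < length (es @ [z]) \<longrightarrow> (es @ [z])!i \<inter> (es @ [z])!Suc i \<noteq> {}"
  proof (intro allI impI)
    fix i assume i: "Suc i < length (es @ [z])"
    show "(es @ [z])!i \<inter> (es @ [z])!Suc i \<noteq> {}"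
    proof (cases "Suc i < length es")
      case True then show ?thesis using es(5) by (simp add: nth_append)
    next
      case False
      then have "i = length es - 1" using i by simp
      then show ?thesis using es(1,4) yz(3) False
        by (simp add: nth_append last_conv_nth)
    qed
  qed
  then show ?case using es yz by (intro exI[of _ "es @ [z]"]) auto
qed

lemma adjb_sym_rt: "(x,y) \<in> (adjb E)\<^sup>* \<Longrightarrow> (y,x) \<in> (adjb E)\<^sup>*"
proof (induction rule: rtrancl_induct)
  case base then show ?case by simp
next
  case (step y z)
  have "(z,y) \<in> adjb E" using step(2) by (auto simp: adjb_def)
  then show ?case using step(3) by (rule converse_rtrancl_into_rtrancl)
qed

lemma noncut:
  assumes fin: "finite E" and conn: "\<forall>f\<in>E. \<forall>g\<in>E. (f,g) \<in> (adjb E)\<^sup>*" and c: "card E > 1"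
  shows "\<exists>e\<in>E. \<forall>f\<in>E-{e}. \<forall>g\<in>E-{e}. (f,g) \<in> (adjb (E-{e}))\<^sup>*"
proof -
  from c have "E \<noteq> {}" by auto
  then obtain e0 where e0: "e0 \<in> E" by auto
  define d where "d f = (LEAST n. (e0,f) \<in> adjb E ^^ n)" for f
  have dex: "(e0,f) \<in> adjb E ^^ d f" if "f \<in> E" for f
  proof -
    have "\<exists>n. (e0,f) \<in> adjb E ^^ n" using conn e0 that by (meson rtrancl_power)
    then show ?thesis unfolding d_def by (rule LeastI_ex)
  qed
  have dle: "d f \<le> n" if "(e0,f) \<in> adjb E ^^ n" for f n
    unfolding d_def using that by (rule Least_le)
  have "Max (d ` E) \<in> d ` E" using fin \<open>E \<noteq> {}\<close> by simp
  then obtain e where e: "e \<in> E" "d e = Max (d ` E)" by auto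
  have emax: "d f \<le> d e" if "f \<in> E" for f using e fin that by simp
  have "e0 \<noteq> e"
  proof
    assume "e0 = e"
    have "d e0 = 0" using dle[of e0 0] by simp
    then have "\<forall>f\<in>E. f = e0" using emax dex \<open>e0 = e\<close> by fastforce
    then have "E \<subseteq> {e0}" by auto
    then have "card E \<le> card {e0}" by (intro card_mono) auto
    then have "card E \<le> 1" by simp
    then show False using c by simp
  qed
  have key: "\<forall>f\<in>E-{e}. d f = n \<longrightarrow> (e0,f) \<in> (adjb (E-{e}))\<^sup>*" for n
  proof (induction n rule: less_induct)
    case (less n)
    show ?case
    proof (intro ballI impI)
      fix f assume f: "f \<in> E - {e}" "d f = n"
      show "(e0,f) \<in> (adjb (E-{e}))\<^sup>*"
      proof (cases n)
        case 0
        then have "(e0,f) \<in> adjb E ^^ 0" using dex[of f] f by simp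
        then show ?thesis by simp
      next
        case (Suc m)
        then have "(e0,f) \<in> adjb E ^^ Suc m" using dex[of f] f by simp
        then obtain g where g: "(e0,g) \<in> adjb E ^^ m" "(g,f) \<in> adjb E" by (rule relpow_Suc_E)
        have gE: "g \<in> E" using g(2) by (auto simp: adjb_def)
        have "d g \<le> m" using dle g(1) by blast
        moreover have "n \<le> d e" using emax f by auto
        ultimately have "g \<noteq> e" using Suc by auto
        have "d g < n" using \<open>d g \<le> m\<close> Suc by simp
        then have "(e0,g) \<in> (adjb (E-{e}))\<^sup>*" using less[of "d g"] \<open>g \<noteq> e\<close> gE by blast
        moreover have "(g,f) \<in> adjb (E-{e})" using g(2) \<open>g \<noteq> e\<close> f by (auto simp: adjb_def)
        ultimately show ?thesis by (rule rtrancl_into_rtrancl)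
      qed
    qed
  qed
  have "\<forall>f\<in>E-{e}. \<forall>g\<in>E-{e}. (f,g) \<in> (adjb (E-{e}))\<^sup>*"
  proof (intro ballI)
    fix f g assume "f \<in> E-{e}" "g \<in> E-{e}"
    then have "(e0,f) \<in> (adjb (E-{e}))\<^sup>*" "(e0,g) \<in> (adjb (E-{e}))\<^sup>*" using key by auto
    then show "(f,g) \<in> (adjb (E-{e}))\<^sup>*" using adjb_sym_rt rtrancl_trans by metis
  qed
  then show ?thesis using e by blast
qed

lemma conn_adj:
  assumes c: "connected_diagram (V,E)" and d: "is_diagram (V,E)"
  shows "\<forall>f\<in>E. \<forall>g\<in>E. (f,g) \<in> (adjb E)\<^sup>*"
proof (intro ballI)
  fix f g assume f: "f \<in> E" and g: "g \<in> E"
  obtain v where v: "v \<in> f" using d f unfolding is_diagram_def by auto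
  obtain v' where v': "v' \<in> g" using d g unfolding is_diagram_def by auto
  have vV: "v \<in> V" "v' \<in> V" using d f g v v' unfolding is_diagram_def by auto
  have "\<exists>es. es \<noteq> [] \<and> set es \<subseteq> E \<and> v \<in> hd es \<and> v' \<in> last es \<and>
    (\<forall>i. Suc i < length es \<longrightarrow> es ! i \<inter> es ! Suc i \<noteq> {})"
    using c vV unfolding connected_diagram_def Let_def prod.case by blast
  then obtain es where es: "es \<noteq> []" "set es \<subseteq> E" "v \<in> hd es" "v' \<in> last es"
    "\<forall>i. Suc i < length es \<longrightarrow> es ! i \<inter> es ! Suc i \<noteq> {}"
    by blast
  have h: "hd es \<in> E" "last es \<in> E" using es(1,2) by auto
  have "(hd es, last es) \<in> (adjb E)\<^sup>*" using walk_rtrancl es by blast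
  moreover have "(f, hd es) \<in> adjb E" using f h v es(3) by (auto simp: adjb_def)
  moreover have "(last es, g) \<in> adjb E" using g h v' es(4) by (auto simp: adjb_def)
  ultimately show "(f,g) \<in> (adjb E)\<^sup>*"
    by (meson converse_rtrancl_into_rtrancl rtrancl_into_rtrancl)
qed

lemma adj_conn:
  assumes a: "\<forall>f\<in>E'. \<forall>g\<in>E'. (f,g) \<in> (adjb E')\<^sup>*" and b: "\<forall>v\<in>V'. \<exists>f\<in>E'. v \<in> f"
  shows "connected_diagram (V',E')"
  unfolding connected_diagram_def
proof (simp only: Let_def prod.case, intro ballI)
  fix v v' assume "v \<in> V'" "v' \<in> V'"
  then obtain f g where fg: "f \<in> E'" "g \<in> E'" "v \<in> f" "v' \<in> g" using b by blast
  then obtain es where "es \<noteq> [] \<and> set es \<subseteq> E' \<and> hd es = f \<and> last es = g \<and>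
           (\<forall>i. Suc i < length es \<longrightarrow> es!i \<inter> es!Suc i \<noteq> {})"
    using rtrancl_walk a by blast
  then show "\<exists>es. es \<noteq> [] \<and> set es \<subseteq> E' \<and> v \<in> hd es \<and> v' \<in> last es \<and>
        (\<forall>i. Suc i < length es \<longrightarrow> es ! i \<inter> es ! Suc i \<noteq> {})" using fg by blast
qed

lemma remove_ok:
  assumes D: "D = (V,E)" and DC: "D \<in> diag_class S L conn" and e: "e \<in> E"
    and f: "f \<in> E" "f \<noteq> e"
    and cc: "conn \<longrightarrow> connected_diagram (remove_block D e)"
  shows "remove_block D e \<in> diag_class S L conn"
proof -
  define V' where "V' = V - {v \<in> e. \<forall>f\<in>E - {e}. v \<notin> f}"
  have R: "remove_block D e = (V', E - {e})" unfolding D V'_def remove_block_def by simp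
  have fin: "finite V" using DC D unfolding diag_class_def by simp
  have g: "greechie (V,E)" using DC D unfolding diag_class_def by simp
  have dg: "V \<noteq> {}" "\<forall>e\<in>E. e \<noteq> {} \<and> e \<subseteq> V" using g unfolding greechie_def is_diagram_def by auto
  have g1: "\<forall>v\<in>V. \<exists>e\<in>E. v \<in> e" using g unfolding greechie_def by auto
  have g2: "(\<exists>x\<in>V. \<exists>y\<in>V. x \<noteq> y) \<longrightarrow> (\<forall>e\<in>E. card e \<ge> 2)" using g unfolding greechie_def by auto
  have g3: "\<forall>e\<in>E. (\<exists>f\<in>E. f \<noteq> e \<and> e \<inter> f \<noteq> {}) \<longrightarrow> card e \<ge> 3" using g unfolding greechie_def by auto
  have g4: "\<forall>e\<in>E. \<forall>f\<in>E. e \<noteq> f \<longrightarrow> card (e \<inter> f) \<le> 1" using g unfolding greechie_def by auto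
  have g5: "\<nexists>es. is_loop E es \<and> length es = 3" using g unfolding greechie_def by auto
  have sz: "\<forall>e\<in>E. card e \<in> S" using DC D unfolding diag_class_def by simp
  have lp: "\<forall>es. is_loop E es \<longrightarrow> length es \<in> L" using DC D unfolding diag_class_def by simp
  have V'V: "V' \<subseteq> V" unfolding V'_def by auto
  have cov: "\<forall>v\<in>V'. \<exists>f\<in>E-{e}. v \<in> f"
  proof
    fix v assume v: "v \<in> V'"
    show "\<exists>f\<in>E-{e}. v \<in> f"
    proof (cases "v \<in> e")
      case True then show ?thesis using v unfolding V'_def by auto
    next
      case False
      then show ?thesis using v V'V g1 by blast
    qed
  qed
  have sub: "\<forall>h\<in>E-{e}. h \<noteq> {} \<and> h \<subseteq> V'" using dg unfolding V'_def by auto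
  have ne: "V' \<noteq> {}" using sub f by blast
  have "greechie (V', E - {e})"
    unfolding greechie_def is_diagram_def
  proof (simp only: prod.case Let_def, intro conjI)
    show "V' \<noteq> {}" by (rule ne)
    show "\<forall>h\<in>E-{e}. h \<noteq> {} \<and> h \<subseteq> V'" by (rule sub)
    show "\<forall>v\<in>V'. \<exists>f\<in>E-{e}. v \<in> f" by (rule cov)
    show "(\<exists>x\<in>V'. \<exists>y\<in>V'. x \<noteq> y) \<longrightarrow> (\<forall>h\<in>E-{e}. card h \<ge> 2)" using g2 V'V by blast
    show "\<forall>h\<in>E-{e}. (\<exists>f\<in>E-{e}. f \<noteq> h \<and> h \<inter> f \<noteq> {}) \<longrightarrow> card h \<ge> 3" using g3 by blast
    show "\<forall>h\<in>E-{e}. \<forall>f\<in>E-{e}. h \<noteq> f \<longrightarrow> card (h \<inter> f) \<le> 1" using g4 by blast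
    show "\<nexists>es. is_loop (E-{e}) es \<and> length es = 3" using g5 loop_mono[of "E-{e}" _ E] by blast
  qed
  moreover have "finite V'" using fin V'V finite_subset by blast
  moreover have "\<forall>h\<in>E-{e}. card h \<in> S" using sz by blast
  moreover have "\<forall>es. is_loop (E-{e}) es \<longrightarrow> length es \<in> L" using lp loop_mono[of "E-{e}" _ E] by blast
  ultimately show ?thesis using cc unfolding R diag_class_def by simp
qed

theorem theorem3:
  fixes S L :: "nat set" and conn :: bool and D :: "'a diagram"
  assumes "D \<in> diag_class S L conn"
  shows "(card (snd D) > 1 \<longrightarrow> (\<exists>e\<in>snd D. remove_block D e \<in> diag_class S L conn))
       \<and> (irreducible_in (diag_class S L conn) D \<longrightarrow> card (snd D) = 1)"
proof -
  obtain V E where D: "D = (V,E)" by (cases D)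
  have DC: "D \<in> diag_class S L conn" by (rule assms)
  have fin: "finite V" using DC D unfolding diag_class_def by simp
  have g: "greechie (V,E)" using DC D unfolding diag_class_def by simp
  have dg: "is_diagram (V,E)" using g unfolding greechie_def by simp
  have dg2: "V \<noteq> {}" "\<forall>e\<in>E. e \<noteq> {} \<and> e \<subseteq> V" using dg unfolding is_diagram_def by auto
  have g1: "\<forall>v\<in>V. \<exists>e\<in>E. v \<in> e" using g unfolding greechie_def by auto
  have EP: "E \<subseteq> Pow V" using dg2(2) by auto
  have "finite (Pow V)" using fin by simp
  then have finE: "finite E" using EP by (rule rev_finite_subset)
  have part1: "card E > 1 \<Longrightarrow> \<exists>e\<in>E. remove_block D e \<in> diag_class S L conn"
  proof -
    assume c: "card E > 1"
    have two: "\<exists>f\<in>E. f \<noteq> e" if he: "e \<in> E" for e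
    proof (rule ccontr)
      assume "\<not> (\<exists>f\<in>E. f \<noteq> e)"
      then have "E \<subseteq> {e}" by blast
      then have "card E \<le> card {e}" by (intro card_mono) auto
      then show False using c by simp
    qed
    show ?thesis
    proof (cases conn)
      case False
      from c have "E \<noteq> {}" by auto
      then obtain e where e: "e \<in> E" by auto
      then obtain f where f: "f \<in> E" "f \<noteq> e" using two by blast
      have "remove_block D e \<in> diag_class S L conn" using remove_ok[OF D DC e f] False by simp
      then show ?thesis using e by blast
    next
      case True
      then have "connected_diagram (V,E)" using DC D unfolding diag_class_def by simp
      then have "\<forall>f\<in>E. \<forall>g\<in>E. (f,g) \<in> (adjb E)\<^sup>*" by (rule conn_adj[OF _ dg])
      then obtain e where e: "e \<in> E" and ee: "\<forall>f\<in>E-{e}. \<forall>g\<in>E-{e}. (f,g) \<in> (adjb (E-{e}))\<^sup>*"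
        using noncut[OF finE _ c] by blast
      obtain f where f: "f \<in> E" "f \<noteq> e" using two e by blast
      define V' where "V' = V - {v \<in> e. \<forall>f\<in>E - {e}. v \<notin> f}"
      have R: "remove_block D e = (V', E - {e})" unfolding D V'_def remove_block_def by simp
      have cov: "\<forall>v\<in>V'. \<exists>f\<in>E-{e}. v \<in> f"
      proof
        fix v assume v: "v \<in> V'"
        show "\<exists>f\<in>E-{e}. v \<in> f"
        proof (cases "v \<in> e")
          case True then show ?thesis using v unfolding V'_def by auto
        next
          case False
          have "v \<in> V" using v unfolding V'_def by simp
          then obtain h where h: "h \<in> E" "v \<in> h" using g1 by blast
          then have "h \<noteq> e" using False by auto
          then show ?thesis using h by blast
        qed
      qed
      have "connected_diagram (remove_block D e)" unfolding R using adj_conn[OF ee cov] .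
      then have "remove_block D e \<in> diag_class S L conn" using remove_ok[OF D DC e f] by simp
      then show ?thesis using e by blast
    qed
  qed
  have ne: "card E \<ge> 1"
  proof (rule ccontr)
    assume "\<not> card E \<ge> 1"
    then have "card E = 0" by simp
    then show False using finE g1 dg2(1) by auto
  qed
  show ?thesis
  proof (intro conjI impI)
    assume "card (snd D) > 1"
    then show "\<exists>e\<in>snd D. remove_block D e \<in> diag_class S L conn" using part1 D by simp
  next
    assume "irreducible_in (diag_class S L conn) D"
    then have "\<not> (\<exists>e\<in>E. remove_block D e \<in> diag_class S L conn)"
      using D unfolding irreducible_in_def by simp
    then have "\<not> card E > 1" using part1 by blast
    then show "card (snd D) = 1" using ne D by simp
  qed
qed

end
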